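(* Let $d\ge 0$ and let $G$ be a $d$-manifold with $w(G)=1+(-1)^d$. Then $G$ is Dehn-Sommerville.
   Context: A finite abstract simplicial complex is a finite set of non-empty finite sets closed under taking non-empty subsets. For $x\in G$, $w(x)=(-1)^{|x|-1}$ and $w(A)=\sum_{x\in A}w(x)$. For $x\in G$: $U(x)=\{y\in G: x\subset y\}$, $B(x)=\{y\in G : y\subset z \text{ for some } z\in U(x)\}$, $S(x)=B(x)\setminus U(x)$. A one-point complex $\{\{v\}\}$ is contractible, and $G$ is contractible if there is $x\in G$ with $S(x)$ and $G\setminus U(x)$ both contractible. The empty complex is the $(-1)$-sphere; for $k\ge 0$, $G$ is a $k$-manifold if every unit sphere $S(x)$, $x\in G$, is a $(k-1)$-sphere, and a $k$-sphere if it is a $k$-manifold and $G\setminus U(x)$ is contractible for some $x\in G$. For a complex $G$ of maximal dimension $d=\max_{x\in G}(|x|-1)$, $f_k(G)$ is the number of elements of cardinality $k+1$, $f_G(t)=1+\sum_{k=0}^d f_k(G)t^{k+1}$, and $h_G(x)=(x-1)^{d+1}f_G(1/(x-1))=h_0+h_1x+\cdots+h_{d+1}x^{d+1}$; $G$ is Dehn-Sommerville if $h_i=h_{d+1-i}$ for all $i=0,\dots,d+1$. *)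

theory Defs
  imports "HOL-Computational_Algebra.Polynomial"
begin

definition simplicial_complex :: "'a set set \<Rightarrow> bool" where
  "simplicial_complex G \<longleftrightarrow> finite G \<and> (\<forall>x\<in>G. x \<noteq> {} \<and> finite x) \<and>
     (\<forall>x\<in>G. \<forall>y. y \<subseteq> x \<and> y \<noteq> {} \<longrightarrow> y \<in> G)"

definition wx :: "'a set \<Rightarrow> int" where
  "wx x = (-1) ^ (card x - 1)"

definition wG :: "'a set set \<Rightarrow> int" where
  "wG A = (\<Sum>x\<in>A. wx x)"

definition U :: "'a set set \<Rightarrow> 'a set \<Rightarrow> 'a set set" where
  "U G x = {y\<in>G. x \<subseteq> y}"

definition B :: "'a set set \<Rightarrow> 'a set \<Rightarrow> 'a set set" where
  "B G x = {y\<in>G. \<exists>z\<in>U G x. y \<subseteq> z}"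

definition S :: "'a set set \<Rightarrow> 'a set \<Rightarrow> 'a set set" where
  "S G x = B G x - U G x"

inductive contractible :: "'a set set \<Rightarrow> bool" where
  point: "contractible {{v}}"
| step: "x \<in> G \<Longrightarrow> contractible (S G x) \<Longrightarrow> contractible (G - U G x) \<Longrightarrow> contractible G"

text \<open>sph k G: G is a (k-1)-sphere (so sph 0 G means G is the (-1)-sphere, i.e. empty).\<close>
fun sph :: "nat \<Rightarrow> 'a set set \<Rightarrow> bool" where
  "sph 0 G = (G = {})"
| "sph (Suc k) G = ((\<forall>x\<in>G. sph k (S G x)) \<and> (\<exists>x\<in>G. contractible (G - U G x)))"

definition manifold :: "nat \<Rightarrow> 'a set set \<Rightarrow> bool" where
  "manifold d G \<longleftrightarrow> (\<forall>x\<in>G. sph d (S G x))"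

text \<open>dimp1 G = d + 1 where d is the maximal dimension (d = -1 for the empty complex).\<close>
definition dimp1 :: "'a set set \<Rightarrow> nat" where
  "dimp1 G = Max (insert 0 (card ` G))"

definition fvec :: "'a set set \<Rightarrow> nat \<Rightarrow> nat" where
  "fvec G k = card {x\<in>G. card x = k + 1}"

definition fpoly :: "'a set set \<Rightarrow> int poly" where
  "fpoly G = 1 + (\<Sum>k<dimp1 G. monom (int (fvec G k)) (k + 1))"

text \<open>h_G(x) = (x-1)^(d+1) f_G(1/(x-1)), written out: for f_G = sum_{j<=d+1} c_j t^j
  this is sum_{j<=d+1} c_j (x-1)^(d+1-j).\<close>
definition hpoly :: "'a set set \<Rightarrow> int poly" where
  "hpoly G = (\<Sum>j\<le>dimp1 G. smult (coeff (fpoly G) j) ([:-1, 1:] ^ (dimp1 G - j)))"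

definition dehn_sommerville :: "'a set set \<Rightarrow> bool" where
  "dehn_sommerville G \<longleftrightarrow>
     (\<forall>i\<le>dimp1 G. coeff (hpoly G) i = coeff (hpoly G) (dimp1 G - i))"

end

theory Submission
  imports Defs
begin

lemma sc_finite: "simplicial_complex G \<Longrightarrow> finite G"
  by (simp add: simplicial_complex_def)

lemma sc_elem: "simplicial_complex G \<Longrightarrow> x \<in> G \<Longrightarrow> x \<noteq> {} \<and> finite x"
  by (simp add: simplicial_complex_def)

lemma sc_sub: "simplicial_complex G \<Longrightarrow> x \<in> G \<Longrightarrow> y \<subseteq> x \<Longrightarrow> y \<noteq> {} \<Longrightarrow> y \<in> G"
  unfolding simplicial_complex_def by blast

lemma S_mem: "y \<in> S G x \<longleftrightarrow> y \<in> G \<and> (\<exists>z\<in>G. x \<subseteq> z \<and> y \<subseteq> z) \<and> \<not> x \<subseteq> y"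
  unfolding S_def B_def U_def by blast

lemma sc_S: assumes G: "simplicial_complex G" shows "simplicial_complex (S G x)"
  unfolding simplicial_complex_def
proof (intro conjI ballI allI impI)
  have "S G x \<subseteq> G" unfolding S_def B_def by blast
  then show "finite (S G x)" using sc_finite[OF G] finite_subset by blast
  fix y assume y: "y \<in> S G x"
  then have yG: "y \<in> G" by (simp add: S_mem)
  show "y \<noteq> {}" "finite y" using sc_elem[OF G yG] by auto
  fix y' assume y': "y' \<subseteq> y \<and> y' \<noteq> {}"
  obtain z where z: "z \<in> G" "x \<subseteq> z" "y \<subseteq> z" and nx: "\<not> x \<subseteq> y" using y by (auto simp: S_mem)
  have "y' \<in> G" using sc_sub[OF G yG] y' by blast
  moreover have "y' \<subseteq> z" using y' z by blast
  moreover have "\<not> x \<subseteq> y'" using y' nx by blast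
  ultimately show "y' \<in> S G x" using z by (auto simp: S_mem)
qed

lemma sc_minusU: assumes G: "simplicial_complex G" shows "simplicial_complex (G - U G x)"
  unfolding simplicial_complex_def
proof (intro conjI ballI allI impI)
  show "finite (G - U G x)" using sc_finite[OF G] by blast
  fix y assume y: "y \<in> G - U G x"
  then have yG: "y \<in> G" and nx: "\<not> x \<subseteq> y" by (auto simp: U_def)
  show "y \<noteq> {}" "finite y" using sc_elem[OF G yG] by auto
  fix y' assume y': "y' \<subseteq> y \<and> y' \<noteq> {}"
  have "y' \<in> G" using sc_sub[OF G yG] y' by blast
  moreover have "\<not> x \<subseteq> y'" using y' nx by blast
  ultimately show "y' \<in> G - U G x" by (auto simp: U_def)
qed

lemma B_alt: "B G x = {y\<in>G. y \<union> x \<in> G}" if G: "simplicial_complex G" and x: "x \<in> G"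
proof
  show "B G x \<subseteq> {y\<in>G. y \<union> x \<in> G}"
  proof
    fix y assume "y \<in> B G x"
    then obtain z where "y \<in> G" "z \<in> G" "x \<subseteq> z" "y \<subseteq> z" unfolding B_def U_def by blast
    moreover have "y \<union> x \<noteq> {}" using x sc_elem[OF G] by blast
    ultimately show "y \<in> {y\<in>G. y \<union> x \<in> G}" using sc_sub[OF G, of z "y \<union> x"] by blast
  qed
  show "{y\<in>G. y \<union> x \<in> G} \<subseteq> B G x" unfolding B_def U_def by blast
qed

lemma wx_alt: "finite y \<Longrightarrow> y \<noteq> {} \<Longrightarrow> wx y = - ((-1) ^ card y)"
  unfolding wx_def by (cases "card y") auto

lemma wB: assumes G: "simplicial_complex G" and x: "x \<in> G" shows "wG (B G x) = 1"
proof -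
  obtain v where v: "v \<in> x" using sc_elem[OF G x] by blast
  define P where "P = {y. y \<union> x \<in> G}"
  have fin: "finite (\<Union>G)" using G by (auto simp: simplicial_complex_def)
  have PP: "P \<subseteq> Pow (\<Union>G)" unfolding P_def by auto
  have finP: "finite P" using finite_subset[OF PP] fin by auto
  have finy: "y \<in> P \<Longrightarrow> finite y" for y using PP fin by (meson PowD finite_subset subsetD)
  define P1 where "P1 = {y\<in>P. v \<in> y}"
  define P0 where "P0 = {y\<in>P. v \<notin> y}"
  have img: "insert v ` P0 = P1"
  proof
    show "insert v ` P0 \<subseteq> P1" unfolding P0_def P1_def P_def using v
      by (auto simp: insert_absorb)
    show "P1 \<subseteq> insert v ` P0"
    proof
      fix y assume y: "y \<in> P1"
      have "(y - {v}) \<union> x = y \<union> x" using v by auto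
      then have "y - {v} \<in> P0" "y = insert v (y - {v})" using y unfolding P0_def P1_def P_def using v
        by (auto simp: insert_absorb)
      then show "y \<in> insert v ` P0" by blast
    qed
  qed
  have inj: "inj_on (insert v) P0" unfolding P0_def inj_on_def by auto
  have s1: "(\<Sum>y\<in>P1. (-1::int) ^ card y) = - (\<Sum>y\<in>P0. (-1::int) ^ card y)"
  proof -
    have "(\<Sum>y\<in>P1. (-1::int) ^ card y) = (\<Sum>y\<in>P0. (-1::int) ^ card (insert v y))"
      using sum.reindex[OF inj, of "\<lambda>y. (-1::int) ^ card y"] img by simp
    also have "\<dots> = (\<Sum>y\<in>P0. - ((-1::int) ^ card y))"
      apply (rule sum.cong) using finy unfolding P0_def by auto
    finally show ?thesis by (simp add: sum_negf)
  qed
  have "P = P0 \<union> P1" "P0 \<inter> P1 = {}" unfolding P0_def P1_def by auto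
  then have s0: "(\<Sum>y\<in>P. (-1::int) ^ card y) = 0"
    using s1 finP by (simp add: sum.union_disjoint)
  have "P = insert {} (B G x)"
  proof
    show "insert {} (B G x) \<subseteq> P" unfolding B_alt[OF G x] P_def using x by auto
    show "P \<subseteq> insert {} (B G x)"
    proof
      fix y assume y: "y \<in> P"
      show "y \<in> insert {} (B G x)"
      proof (cases "y = {}")
        case False
        have "y \<in> G" using sc_sub[OF G, of "y \<union> x" y] y False unfolding P_def by auto
        then show ?thesis using y unfolding B_alt[OF G x] P_def by auto
      qed simp
    qed
  qed
  moreover have "{} \<notin> B G x"
    unfolding B_def using sc_elem[OF G] by auto
  ultimately have "(\<Sum>y\<in>B G x. (-1::int) ^ card y) = -1"
    using s0 finP by (simp add: sum.insert_remove)
  moreover have "wG (B G x) = (\<Sum>y\<in>B G x. - ((-1::int) ^ card y))"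
    unfolding wG_def apply (rule sum.cong) using sc_elem[OF G] wx_alt unfolding B_def by auto
  ultimately show ?thesis by (simp add: sum_negf)
qed

lemma wU: assumes G: "simplicial_complex G" and x: "x \<in> G" shows "wG (U G x) = 1 - wG (S G x)"
proof -
  have "U G x \<subseteq> B G x" unfolding U_def B_def by auto
  moreover have "finite (B G x)" using sc_finite[OF G] unfolding B_def by auto
  ultimately have "wG (B G x) = wG (U G x) + wG (S G x)"
    unfolding wG_def S_def by (metis add.commute sum.subset_diff)
  then show ?thesis using wB[OF G x] by simp
qed

lemma wsplit: assumes G: "simplicial_complex G" shows "wG G = wG (G - U G x) + wG (U G x)"
proof -
  have "U G x \<subseteq> G" unfolding U_def by auto
  then show ?thesis unfolding wG_def using sc_finite[OF G] by (metis sum.subset_diff)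
qed

lemma contr_w: "contractible H \<Longrightarrow> simplicial_complex H \<Longrightarrow> wG H = 1"
proof (induction rule: contractible.induct)
  case (point v) then show ?case by (simp add: wG_def wx_def)
next
  case (step x G)
  then show ?case using wsplit[OF step.prems, of x] wU[OF step.prems step.hyps(1)]
      sc_S[OF step.prems] sc_minusU[OF step.prems] by simp
qed

lemma sph_w: "simplicial_complex H \<Longrightarrow> sph k H \<Longrightarrow> wG H = 1 - (-1) ^ k"
proof (induction k arbitrary: H)
  case 0 then show ?case by (simp add: wG_def)
next
  case (Suc k)
  then obtain x where x: "x \<in> H" "contractible (H - U H x)" by auto
  have "sph k (S H x)" using Suc.prems x by auto
  then have "wG (S H x) = 1 - (-1)^k" using Suc.IH sc_S[OF Suc.prems(1)] by blast
  moreover have "wG (H - U H x) = 1" using contr_w x(2) sc_minusU[OF Suc.prems(1)] by blast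
  ultimately show ?case using wsplit[OF Suc.prems(1), of x] wU[OF Suc.prems(1) x(1)] by simp
qed


lemma cpow: "[:c:]^k = [:(c::int)^k:]"
  by (induction k) (auto simp: mult.commute)

lemma coeff_lin_pow:
  "coeff ([:-1,1:]^m :: int poly) i = (if i \<le> m then (-1)^(m-i) * int (m choose i) else 0)"
proof -
  have "[:-1,1:] = (monom (1::int) 1) + [:-1:]" by (simp add: monom_altdef)
  then have "([:-1,1:]::int poly)^m = (\<Sum>k\<le>m. of_nat (m choose k) * (monom 1 1)^k * [:-1:]^(m-k))"
    by (simp add: binomial_ring)
  also have "\<dots> = (\<Sum>k\<le>m. monom ((-1)^(m-k) * int (m choose k)) k)"
    apply (rule sum.cong, simp)
    by (simp add: monom_power of_nat_poly smult_monom mult.commute cpow mult_monom flip: monom_altdef monom_0)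
  finally show ?thesis by (simp add: coeff_sum)
qed

lemma binom_ext:
  fixes a b :: int
  assumes "j \<le> n"
  shows "(a + b)^j * b^(n-j) = (\<Sum>k\<le>n. int (j choose k) * a^k * b^(n-k))"
proof -
  have "(a + b)^j * b^(n-j) = (\<Sum>k\<le>j. int (j choose k) * a^k * b^(j-k)) * b^(n-j)"
    by (simp add: binomial_ring)
  also have "\<dots> = (\<Sum>k\<le>j. int (j choose k) * a^k * b^(n-k))"
    unfolding sum_distrib_right
  proof (rule sum.cong)
    fix k assume "k \<in> {..j}"
    then have "j - k + (n - j) = n - k" using assms by auto
    then have "b^(j-k) * b^(n-j) = b^(n-k)" by (metis power_add)
    then show "int (j choose k) * a^k * b^(j-k) * b^(n-j) = int (j choose k) * a^k * b^(n-k)"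
      by (simp add: mult.assoc)
  qed simp
  also have "\<dots> = (\<Sum>k\<le>n. int (j choose k) * a^k * b^(n-k))"
    by (rule sum.mono_neutral_left) (use assms in auto)
  finally show ?thesis .
qed

lemma hom_rel:
  fixes c :: "nat \<Rightarrow> int" and a b :: int
  assumes R: "\<And>k. k \<le> n \<Longrightarrow> (\<Sum>j\<le>n. (-1)^j * int (j choose k) * c j) = (-1)^n * c k"
  shows "(\<Sum>j\<le>n. c j * (-a-b)^j * b^(n-j)) = (-1)^n * (\<Sum>j\<le>n. c j * a^j * b^(n-j))"
proof -
  have "(\<Sum>j\<le>n. c j * (-a-b)^j * b^(n-j))
      = (\<Sum>j\<le>n. c j * (-1)^j * (\<Sum>k\<le>n. int (j choose k) * a^k * b^(n-k)))"
  proof (rule sum.cong)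
    fix j assume "j \<in> {..n}"
    then have "(a + b)^j * b^(n-j) = (\<Sum>k\<le>n. int (j choose k) * a^k * b^(n-k))"
      using binom_ext by auto
    moreover have "(-a-b)^j = (-1)^j * (a+b)^j"
    proof -
      have "(-a-b)^j = (-(a+b))^j" by simp
      also have "\<dots> = (-1)^j * (a+b)^j" by (rule power_minus)
      finally show ?thesis .
    qed
    ultimately show "c j * (-a-b)^j * b^(n-j) = c j * (-1)^j * (\<Sum>k\<le>n. int (j choose k) * a^k * b^(n-k))"
      by (metis mult.assoc)
  qed simp
  also have "\<dots> = (\<Sum>k\<le>n. a^k * b^(n-k) * (\<Sum>j\<le>n. (-1)^j * int (j choose k) * c j))"
  proof -
    have "(\<Sum>j\<le>n. c j * (-1)^j * (\<Sum>k\<le>n. int (j choose k) * a^k * b^(n-k)))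
        = (\<Sum>j\<le>n. \<Sum>k\<le>n. a^k * b^(n-k) * ((-1)^j * int (j choose k) * c j))"
      by (simp add: sum_distrib_left mult_ac)
    also have "\<dots> = (\<Sum>k\<le>n. \<Sum>j\<le>n. a^k * b^(n-k) * ((-1)^j * int (j choose k) * c j))"
      by (rule sum.swap)
    also have "\<dots> = (\<Sum>k\<le>n. a^k * b^(n-k) * (\<Sum>j\<le>n. (-1)^j * int (j choose k) * c j))"
      by (simp add: sum_distrib_left)
    finally show ?thesis .
  qed
  also have "\<dots> = (\<Sum>k\<le>n. a^k * b^(n-k) * ((-1)^n * c k))"
    by (rule sum.cong) (auto simp: R)
  also have "\<dots> = (-1)^n * (\<Sum>j\<le>n. c j * a^j * b^(n-j))"
    by (simp add: sum_distrib_left mult_ac)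
  finally show ?thesis .
qed

lemma hom_h:
  fixes c :: "nat \<Rightarrow> int" and a b :: int
  shows "(\<Sum>i\<le>n. coeff (\<Sum>j\<le>n. smult (c j) ([:-1,1:]^(n-j))) i * a^i * b^(n-i))
       = (\<Sum>j\<le>n. c j * b^j * (a-b)^(n-j))"
proof -
  have inner: "(\<Sum>i\<le>n. coeff ([:-1,1:]^m :: int poly) i * a^i * b^(n-i)) = b^(n-m) * (a-b)^m"
    if m: "m \<le> n" for m
  proof -
    have "(\<Sum>i\<le>n. coeff ([:-1,1:]^m :: int poly) i * a^i * b^(n-i))
        = (\<Sum>i\<le>m. coeff ([:-1,1:]^m :: int poly) i * a^i * b^(n-i))"
      by (rule sum.mono_neutral_right) (use m in \<open>auto simp: coeff_lin_pow\<close>)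
    also have "\<dots> = (\<Sum>i\<le>m. b^(n-m) * (int (m choose i) * a^i * (-b)^(m-i)))"
    proof (rule sum.cong)
      fix i assume "i \<in> {..m}"
      then have "n - m + (m - i) = n - i" using m by auto
      then have "b^(n-i) = b^(n-m) * b^(m-i)" by (metis power_add)
      moreover have "(-b)^(m-i) = (-1)^(m-i) * b^(m-i)" by (rule power_minus)
      ultimately show "coeff ([:-1,1:]^m :: int poly) i * a^i * b^(n-i) = b^(n-m) * (int (m choose i) * a^i * (-b)^(m-i))"
        using \<open>i \<in> {..m}\<close> by (simp add: coeff_lin_pow mult_ac)
    qed simp
    also have "\<dots> = b^(n-m) * (\<Sum>i\<le>m. int (m choose i) * a^i * (-b)^(m-i))"
      by (rule sum_distrib_left[symmetric])
    also have "\<dots> = b^(n-m) * (a + (-b))^m"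
      by (simp only: binomial_ring[of a "-b" m])
    finally show ?thesis by simp
  qed
  have "(\<Sum>i\<le>n. coeff (\<Sum>j\<le>n. smult (c j) ([:-1,1:]^(n-j))) i * a^i * b^(n-i))
      = (\<Sum>i\<le>n. \<Sum>j\<le>n. c j * (coeff ([:-1,1:]^(n-j) :: int poly) i * a^i * b^(n-i)))"
    by (rule sum.cong[OF refl]) (simp add: coeff_sum sum_distrib_left sum_distrib_right mult_ac)
  also have "\<dots> = (\<Sum>j\<le>n. c j * (\<Sum>i\<le>n. coeff ([:-1,1:]^(n-j) :: int poly) i * a^i * b^(n-i)))"
    by (subst sum.swap) (simp add: sum_distrib_left)
  also have "\<dots> = (\<Sum>j\<le>n. c j * b^j * (a-b)^(n-j))"
    by (rule sum.cong) (auto simp: inner)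
  finally show ?thesis .
qed

lemma sym_from:
  fixes e :: "nat \<Rightarrow> int"
  assumes "\<And>a b::int. (\<Sum>i\<le>n. e i * a^i * b^(n-i)) = (\<Sum>i\<le>n. e i * b^i * a^(n-i))"
    and i: "i \<le> n"
  shows "e i = e (n-i)"
proof -
  define p where "p = (\<Sum>k\<le>n. monom (e k - e (n-k)) k)"
  have "poly p a = 0" for a
  proof -
    have "(\<Sum>k\<le>n. e k * a^k) = (\<Sum>k\<le>n. e k * a^(n-k))"
      using assms(1)[of a 1] by simp
    also have "\<dots> = (\<Sum>k\<le>n. e (n-k) * a^k)"
      by (rule sum.reindex_bij_witness[where i="\<lambda>k. n - k" and j="\<lambda>k. n - k"]) auto
    finally show ?thesis unfolding p_def
      by (simp add: poly_sum poly_monom left_diff_distrib sum_subtractf)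
  qed
  then have "p = 0" using poly_all_0_iff_0 by blast
  then have "coeff p i = 0" by simp
  moreover have "coeff p i = e i - e (n-i)" unfolding p_def using i
    by (simp add: coeff_sum)
  ultimately show ?thesis by simp
qed


lemma card_le_dimp1: "simplicial_complex G \<Longrightarrow> y \<in> G \<Longrightarrow> card y \<le> dimp1 G"
  unfolding dimp1_def using sc_finite by (intro Max_ge) auto

lemma dimp1_attained: assumes G: "simplicial_complex G" and n: "dimp1 G \<noteq> 0"
  shows "\<exists>y\<in>G. card y = dimp1 G"
proof -
  have "dimp1 G \<in> insert 0 (card ` G)" unfolding dimp1_def using sc_finite[OF G] by (intro Max_in) auto
  then show ?thesis using n by auto
qed

lemma coeff_fpoly: assumes "1 \<le> j" "j \<le> dimp1 G"
  shows "coeff (fpoly G) j = int (card {x\<in>G. card x = j})"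
proof -
  have "coeff (fpoly G) j = (\<Sum>k<dimp1 G. if k = j - 1 then int (fvec G k) else 0)"
  proof -
    have "coeff (fpoly G) j = (\<Sum>k<dimp1 G. if Suc k = j then int (fvec G k) else 0)"
      unfolding fpoly_def using assms by (simp add: coeff_sum coeff_monom)
    also have "\<dots> = (\<Sum>k<dimp1 G. if k = j - 1 then int (fvec G k) else 0)"
      by (rule sum.cong) (use assms in auto)
    finally show ?thesis .
  qed
  also have "\<dots> = int (fvec G (j-1))" using assms by (subst sum.delta) auto
  finally show ?thesis using assms by (simp add: fvec_def)
qed

lemma coeff_fpoly0: "coeff (fpoly G) 0 = 1"
  unfolding fpoly_def by (simp add: coeff_sum coeff_monom)

lemma group_card: assumes G: "simplicial_complex G"
  shows "(\<Sum>y\<in>G. g (card y)) = (\<Sum>j\<le>dimp1 G. int (card {x\<in>G. card x = j}) * (g j :: int))"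
proof -
  have "(\<Sum>y\<in>G. g (card y)) = (\<Sum>j\<le>dimp1 G. \<Sum>y\<in>{x\<in>G. card x = j}. g (card y))"
    by (rule sum.group[symmetric]) (use G sc_finite card_le_dimp1 in auto)
  also have "\<dots> = (\<Sum>j\<le>dimp1 G. int (card {x\<in>G. card x = j}) * g j)"
    by (rule sum.cong) auto
  finally show ?thesis .
qed

lemma count_sub: assumes G: "simplicial_complex G" and y: "y \<in> G" and k: "1 \<le> k"
  shows "card {x\<in>G. card x = k \<and> x \<subseteq> y} = card y choose k"
proof -
  have "{x\<in>G. card x = k \<and> x \<subseteq> y} = {x. x \<subseteq> y \<and> card x = k}"
  proof (intro equalityI subsetI)
    fix x assume x: "x \<in> {x. x \<subseteq> y \<and> card x = k}"
    then have "x \<noteq> {}" using k by auto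
    then show "x \<in> {x\<in>G. card x = k \<and> x \<subseteq> y}" using x sc_sub[OF G y] by auto
  qed auto
  then show ?thesis using n_subsets[of y k] sc_elem[OF G y] by simp
qed

lemma relation_k:
  assumes G: "simplicial_complex G" and M: "manifold d G" and k: "1 \<le> k"
  shows "(\<Sum>j\<le>dimp1 G. (-1)^j * int (j choose k) * int (card {x\<in>G. card x = j}))
         = - ((-1)^d) * int (card {x\<in>G. card x = k})"
proof -
  let ?Gk = "{x\<in>G. card x = k}"
  have fin: "finite G" using sc_finite[OF G] .
  have wUx: "wG (U G x) = (-1)^d" if "x \<in> G" for x
    using wU[OF G that] sph_w[OF sc_S[OF G]] M that unfolding manifold_def by fastforce
  have "(\<Sum>x\<in>?Gk. wG (U G x)) = int (card ?Gk) * (-1)^d"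
    using wUx by simp
  moreover have "(\<Sum>x\<in>?Gk. wG (U G x)) = (\<Sum>x\<in>?Gk. \<Sum>y\<in>G. if x \<subseteq> y then wx y else 0)"
    unfolding wG_def U_def by (rule sum.cong[OF refl]) (simp add: sum.inter_filter fin)
  moreover have "\<dots> = (\<Sum>y\<in>G. \<Sum>x\<in>?Gk. if x \<subseteq> y then wx y else 0)"
    by (rule sum.swap)
  moreover have "\<dots> = (\<Sum>y\<in>G. wx y * int (card {x\<in>G. card x = k \<and> x \<subseteq> y}))"
  proof (rule sum.cong[OF refl])
    fix y assume "y \<in> G"
    have "(\<Sum>x\<in>?Gk. if x \<subseteq> y then wx y else 0) = (\<Sum>x\<in>{x\<in>?Gk. x \<subseteq> y}. wx y)"
      by (rule sum.inter_filter[symmetric]) (use fin in auto)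
    also have "{x\<in>?Gk. x \<subseteq> y} = {x\<in>G. card x = k \<and> x \<subseteq> y}" by auto
    finally show "(\<Sum>x\<in>?Gk. if x \<subseteq> y then wx y else 0) = wx y * int (card {x\<in>G. card x = k \<and> x \<subseteq> y})"
      by simp
  qed
  moreover have "\<dots> = (\<Sum>y\<in>G. - ((-1) ^ card y) * int (card y choose k))"
  proof (rule sum.cong[OF refl])
    fix y assume y: "y \<in> G"
    have "wx y = - ((-1) ^ card y)" using wx_alt sc_elem[OF G y] by auto
    then show "wx y * int (card {x\<in>G. card x = k \<and> x \<subseteq> y}) = - ((-1) ^ card y) * int (card y choose k)"
      using count_sub[OF G y k] by simp
  qed
  moreover have "\<dots> = (\<Sum>j\<le>dimp1 G. int (card {x\<in>G. card x = j}) * (- ((-1) ^ j) * int (j choose k)))"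
    using group_card[OF G, of "\<lambda>j. - ((-1) ^ j) * int (j choose k)"] by simp
  ultimately have "(\<Sum>j\<le>dimp1 G. int (card {x\<in>G. card x = j}) * (- ((-1) ^ j) * int (j choose k)))
     = int (card ?Gk) * (-1)^d" by simp
  then have "- (\<Sum>j\<le>dimp1 G. (-1)^j * int (j choose k) * int (card {x\<in>G. card x = j}))
     = int (card ?Gk) * (-1)^d"
    by (simp add: sum_negf[symmetric] mult_ac)
  then show ?thesis by (simp add: mult.commute minus_equation_iff)
qed

lemma relation_0:
  assumes G: "simplicial_complex G" and w: "wG G = 1 + (-1)^d"
  shows "(\<Sum>j\<le>dimp1 G. (-1)^j * int (card {x\<in>G. card x = j})) = - 1 - (-1)^d"
proof -
  have "wG G = (\<Sum>y\<in>G. - ((-1) ^ card y))"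
    unfolding wG_def by (rule sum.cong[OF refl]) (use wx_alt sc_elem[OF G] in auto)
  also have "\<dots> = (\<Sum>j\<le>dimp1 G. int (card {x\<in>G. card x = j}) * (- ((-1) ^ j)))"
    using group_card[OF G, of "\<lambda>j. - ((-1) ^ j)"] by simp
  also have "\<dots> = - (\<Sum>j\<le>dimp1 G. (-1)^j * int (card {x\<in>G. card x = j}))"
    by (simp add: sum_negf[symmetric] mult_ac)
  finally show ?thesis using w by simp
qed


theorem mainTheorem11:
  fixes G :: "'a set set" and d :: nat
  assumes "simplicial_complex G"
    and "manifold d G"
    and "wG G = 1 + (-1) ^ d"
  shows "dehn_sommerville G"
proof -
  note G = assms(1)
  define n where "n = dimp1 G"
  define c where "c j = coeff (fpoly G) j" for j
  define F where "F j = int (card {x\<in>G. card x = j})" for j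
  have E0: "{x\<in>G. card x = 0} = {}" using sc_elem[OF G] by (auto simp: card_eq_0_iff)
  have F0: "F 0 = 0" unfolding F_def E0 by simp
  have cF: "c j = F j + (if j = 0 then 1 else 0)" if "j \<le> n" for j
  proof (cases "j = 0")
    case True then show ?thesis using F0 by (simp add: c_def coeff_fpoly0)
  next
    case False then show ?thesis using that coeff_fpoly[of j G] by (simp add: c_def F_def n_def)
  qed
  have Rs: "(\<Sum>j\<le>n. (-1)^j * int (j choose k) * c j) = - ((-1)^d) * c k" if k: "k \<le> n" for k
  proof -
    have "(\<Sum>j\<le>n. (-1)^j * int (j choose k) * c j)
        = (\<Sum>j\<le>n. (-1)^j * int (j choose k) * F j + (if j = 0 then int (j choose k) else 0))"
      by (rule sum.cong[OF refl]) (simp add: cF algebra_simps)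
    also have "\<dots> = (\<Sum>j\<le>n. (-1)^j * int (j choose k) * F j) + int (0 choose k)"
      by (simp add: sum.distrib)
    finally have e: "(\<Sum>j\<le>n. (-1)^j * int (j choose k) * c j) = (\<Sum>j\<le>n. (-1)^j * int (j choose k) * F j) + int (0 choose k)" .
    show ?thesis
    proof (cases "k = 0")
      case True
      then show ?thesis using e relation_0[OF G assms(3)] cF[of 0]
        by (simp add: F_def n_def E0)
    next
      case False
      then show ?thesis using e relation_k[OF G assms(2), of k] cF[OF k]
        by (simp add: F_def n_def)
    qed
  qed
  have cn: "c n \<noteq> 0"
  proof (cases "n = 0")
    case True then show ?thesis using cF[of 0] F0 by simp
  next
    case False
    then obtain y where "y \<in> G" "card y = n" using dimp1_attained[OF G] n_def by auto
    then have "card {x\<in>G. card x = n} \<noteq> 0" using sc_finite[OF G] by (auto simp: card_eq_0_iff)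
    then show ?thesis using cF[of n] False by (simp add: F_def)
  qed
  have "(\<Sum>j\<le>n. (-1)^j * int (j choose n) * c j) = (-1)^n * c n"
  proof -
    have "(\<Sum>j\<le>n. (-1)^j * int (j choose n) * c j) = (\<Sum>j\<in>{n}. (-1)^j * int (j choose n) * c j)"
      by (rule sum.mono_neutral_right) auto
    then show ?thesis by simp
  qed
  then have "(- ((-1)^d)) * c n = ((-1)^n :: int) * c n" using Rs[of n] by simp
  then have par: "- ((-1)^d) = ((-1)^n :: int)" using cn by (metis mult_cancel_right)
  have R: "\<And>k. k \<le> n \<Longrightarrow> (\<Sum>j\<le>n. (-1)^j * int (j choose k) * c j) = (-1)^n * c k"
    using Rs par by simp
  define e where "e i = coeff (hpoly G) i" for i
  have hdef: "hpoly G = (\<Sum>j\<le>n. smult (c j) ([:-1,1:]^(n-j)))"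
    unfolding hpoly_def n_def c_def ..
  have P: "(\<Sum>i\<le>n. e i * a^i * b^(n-i)) = (\<Sum>j\<le>n. c j * b^j * (a-b)^(n-j))" for a b :: int
    unfolding e_def hdef by (rule hom_h)
  have swap: "(\<Sum>j\<le>n. c j * b^j * (a-b)^(n-j)) = (\<Sum>j\<le>n. c j * a^j * (b-a)^(n-j))" for a b :: int
  proof -
    have "(\<Sum>j\<le>n. c j * (-b-(a-b))^j * (a-b)^(n-j)) = (-1)^n * (\<Sum>j\<le>n. c j * b^j * (a-b)^(n-j))"
      by (rule hom_rel[OF R])
    moreover have "(\<Sum>j\<le>n. c j * (-b-(a-b))^j * (a-b)^(n-j)) = (-1)^n * (\<Sum>j\<le>n. c j * a^j * (b-a)^(n-j))"
      unfolding sum_distrib_left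
    proof (rule sum.cong[OF refl])
      fix j assume "j \<in> {..n}"
      then have jn: "j + (n - j) = n" by auto
      have "(-b-(a-b))^j = (-1)^j * a^j" by (simp add: power_minus[symmetric])
      moreover have "(a-b)^(n-j) = (-1)^(n-j) * (b-a)^(n-j)"
      proof -
        have "(a-b)^(n-j) = (-(b-a))^(n-j)" by simp
        also have "\<dots> = (-1)^(n-j) * (b-a)^(n-j)" by (rule power_minus)
        finally show ?thesis .
      qed
      moreover have "(-1::int)^j * (-1)^(n-j) = (-1)^n" using jn by (metis power_add)
      ultimately show "c j * (-b-(a-b))^j * (a-b)^(n-j) = (-1)^n * (c j * a^j * (b-a)^(n-j))"
        by (metis (no_types, lifting) mult.assoc mult.left_commute)
    qed
    ultimately show ?thesis by simp
  qed
  have sym: "(\<Sum>i\<le>n. e i * a^i * b^(n-i)) = (\<Sum>i\<le>n. e i * b^i * a^(n-i))" for a b :: int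
    using P[of a b] P[of b a] swap[of b a] by simp
  show ?thesis
    unfolding dehn_sommerville_def
  proof (intro allI impI)
    fix i assume "i \<le> dimp1 G"
    then have "e i = e (n - i)" by (intro sym_from[OF sym]) (simp add: n_def)
    then show "coeff (hpoly G) i = coeff (hpoly G) (dimp1 G - i)"
      unfolding e_def n_def .
  qed
qed

end
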